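(* Let $p$ be a prime with $p \equiv 7 \pmod{12}$. For each primitive $6$th root of unity $u \in \mathbb{Z}_p$, there is a simple $\mathbb{Z}_p$-invariant rank $3$ matroid structure on $\mathbb{Z}_p$ in which a $3$-element subset is a basis unless it is of the form $\{x, x+\alpha^2, x+u\alpha^2\}$ for some $x \in \mathbb{Z}_p$ and $\alpha \in \mathbb{Z}_p^\times$.
   Context: $\mathbb{Z}_p$ acts on itself by translation; a matroid on $\mathbb{Z}_p$ is $\mathbb{Z}_p$-invariant if translates of bases are bases. A matroid is simple if every circuit has at least three elements. *)

theory Defs
  imports "HOL-Computational_Algebra.Primes"
begin

definition matroid_bases :: "'a set \<Rightarrow> 'a set set \<Rightarrow> bool" where
  "matroid_bases E \<B> \<longleftrightarrow> finite E \<and> \<B> \<noteq> {} \<and> (\<forall>B\<in>\<B>. B \<subseteq> E) \<and>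
     (\<forall>B1\<in>\<B>. \<forall>B2\<in>\<B>. \<forall>x\<in>B1 - B2. \<exists>y\<in>B2 - B1. insert y (B1 - {x}) \<in> \<B>)"

definition m_indep :: "'a set set \<Rightarrow> 'a set \<Rightarrow> bool" where
  "m_indep \<B> X \<longleftrightarrow> (\<exists>B\<in>\<B>. X \<subseteq> B)"

definition m_circuit :: "'a set \<Rightarrow> 'a set set \<Rightarrow> 'a set \<Rightarrow> bool" where
  "m_circuit E \<B> C \<longleftrightarrow> C \<subseteq> E \<and> \<not> m_indep \<B> C \<and> (\<forall>D. D \<subset> C \<longrightarrow> m_indep \<B> D)"

definition matroid_rank_is :: "'a set set \<Rightarrow> nat \<Rightarrow> bool" where
  "matroid_rank_is \<B> r \<longleftrightarrow> (\<forall>B\<in>\<B>. card B = r)"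

definition matroid_simple :: "'a set \<Rightarrow> 'a set set \<Rightarrow> bool" where
  "matroid_simple E \<B> \<longleftrightarrow> (\<forall>C. m_circuit E \<B> C \<longrightarrow> card C \<ge> 3)"

text \<open>\<open>\<int>\<^sub>p\<close> is modelled as \<open>{0..<p}\<close> with arithmetic mod p; translation by t.\<close>
definition zp_translate :: "nat \<Rightarrow> nat \<Rightarrow> nat set \<Rightarrow> nat set" where
  "zp_translate p t B = (\<lambda>y. (y + t) mod p) ` B"

definition zp_invariant :: "nat \<Rightarrow> nat set set \<Rightarrow> bool" where
  "zp_invariant p \<B> \<longleftrightarrow> (\<forall>B\<in>\<B>. \<forall>t<p. zp_translate p t B \<in> \<B>)"

definition primitive_6th_root_mod :: "nat \<Rightarrow> nat \<Rightarrow> bool" where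
  "primitive_6th_root_mod p u \<longleftrightarrow> u < p \<and> u ^ 6 mod p = 1 \<and>
     (\<forall>k. 0 < k \<and> k < 6 \<longrightarrow> u ^ k mod p \<noteq> 1)"

end

theory Submission
  imports Defs "HOL-Number_Theory.Number_Theory"
begin


lemma int_fermat:
  assumes "prime p" "\<not> int p dvd s"
  shows "[s^(p-1) = 1] (mod int p)"
proof -
  define n where "n = nat (s mod int p)"
  have p0: "int p > 0" using assms prime_gt_0_nat by simp
  have n: "int n = s mod int p" using p0 by (simp add: n_def)
  have "\<not> p dvd n"
  proof
    assume "p dvd n"
    then have "int p dvd int n" by simp
    then have "int p dvd s mod int p" using n by simp
    then show False using assms(2) by (simp add: dvd_mod_iff)
  qed
  then have "[n^(p-1) = 1] (mod p)" by (rule fermat_theorem[OF assms(1)])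
  then have "[int n^(p-1) = 1] (mod int p)" using cong_int_iff by (metis of_nat_1 of_nat_power)
  moreover have "[int n = s] (mod int p)" by (simp add: n cong_def)
  ultimately show ?thesis by (meson cong_pow cong_sym cong_trans)
qed

lemma no_sum_squares:
  assumes p: "prime p" and p4: "p mod 4 = 3" and st: "int p dvd s^2 + t^2" and t: "\<not> int p dvd t"
  shows False
proof -
  have pi: "prime (int p)" using p by simp
  have s: "\<not> int p dvd s"
  proof
    assume "int p dvd s"
    then have "int p dvd s^2" by (metis dvd_mult2 power2_eq_square)
    then have "int p dvd t^2" using st by (metis dvd_add_right_iff)
    then show False using t pi prime_dvd_power by blast
  qed
  define m where "m = (p - 1) div 2"
  have pm: "p - 1 = 2 * m" and om: "odd m" using p4 unfolding m_def by presburger+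
  have "[s^2 = -(t^2)] (mod int p)" using st by (simp add: cong_iff_dvd_diff)
  then have "[(s^2)^m = (-(t^2))^m] (mod int p)" by (rule cong_pow)
  moreover have "(s^2)^m = s^(p-1)" by (simp only: pm power_mult)
  moreover have "(-(t^2))^m = - ((t^2)^m)" using om by simp
  moreover have "(t^2)^m = t^(p-1)" by (simp only: pm power_mult)
  ultimately have "[s^(p-1) = - (t^(p-1))] (mod int p)" by simp
  moreover have "[s^(p-1) = 1] (mod int p)" using int_fermat[OF p s] .
  moreover have "[t^(p-1) = 1] (mod int p)" using int_fermat[OF p t] .
  ultimately have "[1 = -1] (mod int p)"
    by (meson cong_minus_minus_iff cong_sym cong_trans)
  then have "int p dvd 2" by (simp add: cong_iff_dvd_diff)
  then have "p dvd 2" by presburger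
  then have "p \<le> 2" by (simp add: dvd_imp_le)
  then show False using p4 by simp
qed

locale netto =
  fixes p :: nat and u :: int
  assumes p: "prime p" and p4: "p mod 4 = 3" and hu: "[u^2 + 1 = u] (mod int p)"
begin

definition trI :: "int \<Rightarrow> int \<Rightarrow> int set" where
  "trI x a = {x mod int p, (x+a) mod int p, (x + u*a) mod int p}"

definition Q :: "int \<Rightarrow> bool" where
  "Q a \<longleftrightarrow> (\<exists>s. int p dvd a - s^2) \<and> \<not> int p dvd a"

lemma pi: "prime (int p)" using p by simp

lemma wit: "B = A + int p * c \<Longrightarrow> A mod int p = B mod int p"
  by (metis mod_mult_self2 )

lemma wit2: "A - (B + int p * c) = M * h \<Longrightarrow> h = 0 \<Longrightarrow> A mod int p = B mod int p"
  by (metis add.commute diff_eq_eq mod_mult_self2 mult_zero_right)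

lemma kex: obtains k where "u^2 = u - 1 + int p * k"
proof -
  from hu obtain k where "u = u^2 + 1 + int p * k" using cong_iff_lin by blast
  then have "u^2 = u - 1 + int p * (-k)" by simp
  then show ?thesis using that by blast
qed

lemma u_ndvd: "\<not> int p dvd u"
proof
  assume d: "int p dvd u"
  obtain k where k: "u^2 = u - 1 + int p * k" using kex by blast
  have "int p dvd u^2" using d by (metis dvd_mult2 power2_eq_square)
  then have "int p dvd (u^2 - u - int p * k)" using d by simp
  moreover have "u^2 - u - int p * k = -1" using k by simp
  ultimately have "int p dvd 1" by simp
  then show False using pi by (metis not_prime_unit)
qed

lemma hk: obtains k where "u^2 - u + 1 - int p * k = 0"
proof -
  obtain k where k: "u^2 = u - 1 + int p * k" using kex by blast
  then have h: "u^2 - u + 1 - int p * k = 0" by simp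
  then show ?thesis using that by blast
qed

lemma r1a: "(x+a+u^2*a) mod int p = (x+u*a) mod int p"
proof -
  obtain k where h: "u^2 - u + 1 - int p * k = 0" using hk by blast
  show ?thesis
    by (rule wit2[of _ _ "k*a" "a", OF _ h]) (simp add: algebra_simps power2_eq_square power3_eq_cube power4_eq_xxxx)
qed
lemma r1b: "(x+a+u*(u^2*a)) mod int p = x mod int p"
proof -
  obtain k where h: "u^2 - u + 1 - int p * k = 0" using hk by blast
  show ?thesis
    by (rule wit2[of _ _ "(k+k*u)*a" "a*(u+1)", OF _ h]) (simp add: algebra_simps power2_eq_square power3_eq_cube power4_eq_xxxx)
qed
lemma r2a: "(x+u*a+u^4*a) mod int p = x mod int p"
proof -
  obtain k where h: "u^2 - u + 1 - int p * k = 0" using hk by blast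
  show ?thesis
    by (rule wit2[of _ _ "(k+k*u)*u*a" "a*(u^2+u)", OF _ h]) (simp add: algebra_simps power2_eq_square power3_eq_cube power4_eq_xxxx)
qed
lemma r2b: "(x+u*a+u*(u^4*a)) mod int p = (x+a) mod int p"
proof -
  obtain k where h: "u^2 - u + 1 - int p * k = 0" using hk by blast
  show ?thesis
    by (rule wit2[of _ _ "((k+k*u)*u^2-k)*a" "a*(u^3+u^2-1)", OF _ h]) (simp add: algebra_simps power2_eq_square power3_eq_cube power4_eq_xxxx)
qed

lemma rot1: "trI (x+a) (u^2*a) = trI x a"
  unfolding trI_def using r1a[of x a] r1b[of x a] by auto

lemma rot2: "trI (x+u*a) (u^4*a) = trI x a"
  unfolding trI_def using r2a[of x a] r2b[of x a] by auto

lemma Q_mult: assumes "Q a" "c = u^2 \<or> c = u^4" shows "Q (c*a)"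
proof -
  obtain s where s: "int p dvd a - s^2" and na: "\<not> int p dvd a" using assms(1) Q_def by blast
  obtain v where c: "c = v^2" and v: "\<not> int p dvd v" using assms(2) u_ndvd
    by (metis power_mult power_mult_distrib pi prime_dvd_power_iff numeral_Bit0 mult_2 zero_less_numeral
        power2_eq_square power_add)
  have "int p dvd c*(a - s^2)" using s by simp
  moreover have "c*(a - s^2) = c*a - (v*s)^2" using c by (simp add: algebra_simps power_mult_distrib)
  ultimately have 1: "int p dvd c*a - (v*s)^2" by simp
  have "\<not> int p dvd c" using c v pi prime_dvd_power by blast
  then have "\<not> int p dvd c*a" using na pi by (simp add: prime_dvd_mult_iff)
  then show ?thesis using 1 Q_def by blast
qed

lemma L1:
  assumes Qa: "Q a" and y: "y \<in> trI x a" and z: "z \<in> trI x a" and yz: "y \<noteq> z"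
  shows "\<exists>x1 a1. Q a1 \<and> trI x1 a1 = trI x a \<and> {y,z} = {x1 mod int p, (x1+a1) mod int p}"
proof -
  have q2: "Q (u^2*a)" and q4: "Q (u^4*a)" using Q_mult[OF Qa] by auto
  have c1: "\<exists>x1 a1. Q a1 \<and> trI x1 a1 = trI x a \<and> {y,z} = {x1 mod int p, (x1+a1) mod int p}"
    if "{y,z} = {x mod int p, (x+a) mod int p}" using that Qa by blast
  have c2: "\<exists>x1 a1. Q a1 \<and> trI x1 a1 = trI x a \<and> {y,z} = {x1 mod int p, (x1+a1) mod int p}"
    if "{y,z} = {(x+a) mod int p, (x+u*a) mod int p}"
    using that q2 rot1[of x a] r1a[of x a] by (metis (no_types))
  have c3: "\<exists>x1 a1. Q a1 \<and> trI x1 a1 = trI x a \<and> {y,z} = {x1 mod int p, (x1+a1) mod int p}"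
    if "{y,z} = {(x+u*a) mod int p, x mod int p}"
    using that q4 rot2[of x a] r2a[of x a] by (metis (no_types))
  from y z yz have "{y,z} = {x mod int p, (x+a) mod int p} \<or> {y,z} = {(x+a) mod int p, (x+u*a) mod int p}
     \<or> {y,z} = {(x+u*a) mod int p, x mod int p}"
    unfolding trI_def by auto
  then show ?thesis using c1 c2 c3 by blast
qed

lemma main:
  assumes Qa: "Q a" and Qb: "Q b" and y: "y \<in> trI x a \<inter> trI x' b" and z: "z \<in> trI x a \<inter> trI x' b"
    and yz: "y \<noteq> z"
  shows "trI x a = trI x' b"
proof -
  obtain x1 a1 where Q1: "Q a1" and t1: "trI x1 a1 = trI x a" and e1: "{y,z} = {x1 mod int p, (x1+a1) mod int p}"
    using L1[OF Qa _ _ yz] y z by blast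
  obtain x2 a2 where Q2: "Q a2" and t2: "trI x2 a2 = trI x' b" and e2: "{y,z} = {x2 mod int p, (x2+a2) mod int p}"
    using L1[OF Qb _ _ yz] y z by blast
  have ne: "x1 mod int p \<noteq> (x1+a1) mod int p" using e1 yz by (metis doubleton_eq_iff)
  from e1 e2 ne have "(x1 mod int p = x2 mod int p \<and> (x1+a1) mod int p = (x2+a2) mod int p)
     \<or> (x1 mod int p = (x2+a2) mod int p \<and> (x1+a1) mod int p = x2 mod int p)"
    by (metis doubleton_eq_iff)
  then show ?thesis
  proof
    assume h: "x1 mod int p = x2 mod int p \<and> (x1+a1) mod int p = (x2+a2) mod int p"
    then have d1: "int p dvd x1 - x2" and d2: "int p dvd (x1 + a1) - (x2 + a2)"
      by (simp_all add: mod_eq_dvd_iff)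
    have "int p dvd ((x1 + a1) - (x2 + a2)) - (x1 - x2)" by (rule dvd_diff[OF d2 d1])
    then have d3: "int p dvd a1 - a2" by (simp add: algebra_simps)
    have "int p dvd (x1 - x2) + u * (a1 - a2)" using d1 d3 by simp
    then have "(x1 + u*a1) mod int p = (x2 + u*a2) mod int p"
      by (simp add: mod_eq_dvd_iff algebra_simps)
    then have "trI x1 a1 = trI x2 a2" unfolding trI_def using h by simp
    then show ?thesis using t1 t2 by simp
  next
    assume h: "x1 mod int p = (x2+a2) mod int p \<and> (x1+a1) mod int p = x2 mod int p"
    then have d1: "int p dvd x1 - (x2 + a2)" and d2: "int p dvd (x1 + a1) - x2"
      by (simp_all add: mod_eq_dvd_iff)
    have "int p dvd ((x1 + a1) - x2) - (x1 - (x2 + a2))" by (rule dvd_diff[OF d2 d1])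
    then have d3: "int p dvd a1 + a2" by (simp add: algebra_simps)
    obtain s where s: "int p dvd a1 - s^2" using Q1 Q_def by blast
    obtain t where t: "int p dvd a2 - t^2" and na: "\<not> int p dvd a2" using Q2 Q_def by blast
    have nt: "\<not> int p dvd t"
    proof
      assume "int p dvd t"
      then have "int p dvd t^2" by (metis dvd_mult2 power2_eq_square)
      then show False using t na by (metis dvd_diff_commute dvd_add_right_iff diff_add_cancel)
    qed
    have "int p dvd (a1 + a2) - (a1 - s^2) - (a2 - t^2)" by (rule dvd_diff[OF dvd_diff[OF d3 s] t])
    then have "int p dvd s^2 + t^2" by (simp add: algebra_simps)
    then show ?thesis using no_sum_squares[OF p p4 _ nt] by blast
  qed
qed

end

lemma u_cond:
  assumes p: "prime p" and pr: "primitive_6th_root_mod p u"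
  shows "[int u^2 + 1 = int u] (mod int p)"
proof -
  define v where "v = int u"
  have p1: "p > 1" using p prime_gt_1_nat by blast
  have pi: "prime (int p)" using p by simp
  have nk: "\<not> int p dvd v^k - 1" if "0 < k" "k < 6" for k
  proof
    assume "int p dvd v^k - 1"
    then have "[v^k = 1] (mod int p)" by (simp add: cong_iff_dvd_diff)
    then have "[int (u^k) = int 1] (mod int p)" by (simp add: v_def)
    then have "[u^k = 1] (mod p)" using cong_int_iff by blast
    then have "u^k mod p = 1" using p1 by (simp add: cong_def)
    then show False using pr that unfolding primitive_6th_root_mod_def by blast
  qed
  have "u^6 mod p = 1 mod p" using pr p1 unfolding primitive_6th_root_mod_def by simp
  then have "[u^6 = 1] (mod p)" by (simp add: cong_def)
  then have "[int (u^6) = int 1] (mod int p)" using cong_int_iff by blast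
  then have "int p dvd v^6 - 1" by (simp add: v_def cong_iff_dvd_diff)
  moreover have "v^6 - 1 = (v^3 - 1) * (v^3 + 1)" by (simp add: algebra_simps power_add[symmetric])
  ultimately have "int p dvd (v^3 - 1) * (v^3 + 1)" by simp
  then have "int p dvd v^3 - 1 \<or> int p dvd v^3 + 1" using pi prime_dvd_mult_iff by blast
  then have "int p dvd v^3 + 1" using nk[of 3] by simp
  moreover have "v^3 + 1 = (v + 1) * (v^2 - v + 1)" by (simp add: algebra_simps power2_eq_square power3_eq_cube)
  ultimately have "int p dvd (v + 1) * (v^2 - v + 1)" by simp
  moreover have "\<not> int p dvd v + 1"
  proof
    assume "int p dvd v + 1"
    then have "int p dvd (v + 1) * (v - 1)" by simp
    moreover have "(v + 1) * (v - 1) = v^2 - 1" by (simp add: algebra_simps power2_eq_square)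
    ultimately show False using nk[of 2] by simp
  qed
  ultimately have "int p dvd v^2 - v + 1" using pi prime_dvd_mult_iff by blast
  then show ?thesis by (simp add: v_def cong_iff_dvd_diff algebra_simps)
qed

definition dep :: "nat \<Rightarrow> nat \<Rightarrow> nat set \<Rightarrow> bool" where
  "dep p u S \<longleftrightarrow> (\<exists>x \<alpha>. x < p \<and> \<alpha> < p \<and> \<alpha> \<noteq> 0 \<and>
                        S = {x, (x + \<alpha>^2) mod p, (x + u * \<alpha>^2) mod p})"

lemma K:
  assumes p: "prime p" and p4: "p mod 4 = 3" and pr: "primitive_6th_root_mod p u"
    and d1: "dep p u S1" and d2: "dep p u S2"
    and y: "y \<in> S1" "y \<in> S2" and z: "z \<in> S1" "z \<in> S2" and yz: "y \<noteq> z"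
  shows "S1 = S2"
proof -
  interpret netto p "int u" using p p4 u_cond[OF p pr] by unfold_locales
  have pi: "prime (int p)" using p by simp
  have conv: "int ` S = trI (int x) (int \<alpha>^2) \<and> Q (int \<alpha>^2)"
    if "x < p" "\<alpha> < p" "\<alpha> \<noteq> 0" "S = {x, (x + \<alpha>^2) mod p, (x + u * \<alpha>^2) mod p}" for S x \<alpha>
  proof
    show "int ` S = trI (int x) (int \<alpha>^2)" using that unfolding trI_def
      by (simp add: of_nat_mod)
    have "\<not> p dvd \<alpha>" using that by (simp add: nat_dvd_not_less)
    then have "\<not> int p dvd int \<alpha>" by simp
    then have "\<not> int p dvd int \<alpha>^2" using pi prime_dvd_power by blast
    then show "Q (int \<alpha>^2)" unfolding Q_def by (metis dvd_0_right diff_self)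
  qed
  obtain x \<alpha> where "x < p" "\<alpha> < p" "\<alpha> \<noteq> 0" "S1 = {x, (x + \<alpha>^2) mod p, (x + u * \<alpha>^2) mod p}"
    using d1 dep_def by blast
  then have c1: "int ` S1 = trI (int x) (int \<alpha>^2)" and q1: "Q (int \<alpha>^2)" using conv by blast+
  obtain x' \<beta> where "x' < p" "\<beta> < p" "\<beta> \<noteq> 0" "S2 = {x', (x' + \<beta>^2) mod p, (x' + u * \<beta>^2) mod p}"
    using d2 dep_def by blast
  then have c2: "int ` S2 = trI (int x') (int \<beta>^2)" and q2: "Q (int \<beta>^2)" using conv by blast+
  have "trI (int x) (int \<alpha>^2) = trI (int x') (int \<beta>^2)"
    by (rule main[OF q1 q2, of "int y" _ _ "int z"]) (use y z yz c1 c2 in auto)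
  then have "int ` S1 = int ` S2" using c1 c2 by simp
  then show ?thesis by (simp add: inj_image_eq_iff)
qed

lemma dep_tr:
  assumes "dep p u S" "p > 0"
  shows "dep p u (zp_translate p t S)"
proof -
  obtain x \<alpha> where h: "x < p" "\<alpha> < p" "\<alpha> \<noteq> 0" "S = {x, (x + \<alpha>^2) mod p, (x + u * \<alpha>^2) mod p}"
    using assms dep_def by blast
  have e: "((x + c) mod p + t) mod p = ((x + t) mod p + c) mod p" for c
    by (simp only: mod_add_left_eq) (simp add: ac_simps)
  have "zp_translate p t S = {(x+t) mod p, ((x + \<alpha>^2) mod p + t) mod p, ((x + u * \<alpha>^2) mod p + t) mod p}"
    unfolding zp_translate_def h(4) by simp
  also have "\<dots> = {(x+t) mod p, ((x+t) mod p + \<alpha>^2) mod p, ((x+t) mod p + u * \<alpha>^2) mod p}"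
    by (simp only: e)
  finally have eq: "zp_translate p t S = {(x+t) mod p, ((x+t) mod p + \<alpha>^2) mod p, ((x+t) mod p + u * \<alpha>^2) mod p}" .
  have "(x+t) mod p < p" using assms(2) by simp
  then show ?thesis unfolding dep_def using h(2,3) eq by blast
qed

lemma tr_back:
  assumes "S \<subseteq> {0..<p}" "t < p"
  shows "zp_translate p (p - t) (zp_translate p t S) = S"
proof -
  have "((y + t) mod p + (p - t)) mod p = y" if "y \<in> S" for y
  proof -
    have "((y + t) mod p + (p - t)) mod p = (y + t + (p - t)) mod p" by (simp only: mod_add_left_eq)
    also have "y + t + (p - t) = y + p" using assms(2) by simp
    finally show ?thesis using assms(1) that by auto
  qed
  then show ?thesis unfolding zp_translate_def image_image by simp
qed

lemma tr_inj:
  assumes "p > 0"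
  shows "inj_on (\<lambda>y. (y + t) mod p) {0..<(p::nat)}"
proof
  fix y y' assume "y \<in> {0..<p}" "y' \<in> {0..<p}" "(y + t) mod p = (y' + t) mod p"
  then have "[y + t = y' + t] (mod p)" by (simp add: cong_def)
  then have "[y = y'] (mod p)" by (simp add: cong_add_rcancel_nat)
  then show "y = y'" using \<open>y \<in> {0..<p}\<close> \<open>y' \<in> {0..<p}\<close> by (simp add: cong_def)
qed

theorem proposition3p13:
  fixes p u :: nat
  assumes "prime p" and "p mod 12 = 7" and "primitive_6th_root_mod p u"
  shows "\<exists>\<B>. matroid_bases {0..<p} \<B> \<and> matroid_rank_is \<B> 3 \<and>
           matroid_simple {0..<p} \<B> \<and> zp_invariant p \<B> \<and>
           (\<forall>S. S \<subseteq> {0..<p} \<and> card S = 3 \<longrightarrow>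
              (S \<in> \<B> \<longleftrightarrow>
                 \<not> (\<exists>x \<alpha>. x < p \<and> \<alpha> < p \<and> \<alpha> \<noteq> 0 \<and>
                        S = {x, (x + \<alpha>^2) mod p, (x + u * \<alpha>^2) mod p})))"
proof -
  define E where "E = {0..<p}"
  define BB where "BB = {S. S \<subseteq> E \<and> card S = 3 \<and> \<not> dep p u S}"
  have p7: "p \<ge> 7" using assms(2) by presburger
  have p4: "p mod 4 = 3" using assms(2) by presburger
  have cE: "card E = p" "finite E" unfolding E_def by auto
  have Kk: "S1 = S2" if "dep p u S1" "dep p u S2" "y \<in> S1" "y \<in> S2" "z \<in> S1" "z \<in> S2" "y \<noteq> z"
    for S1 S2 y z using K[OF assms(1) p4 assms(3)] that by blast
  have ext: "\<exists>B\<in>BB. C \<subseteq> B" if C: "C \<subseteq> E" "card C \<le> 2" for C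
  proof -
    have fC: "finite C" using C cE finite_subset by blast
    have "2 - card C \<le> card (E - C)" using C cE fC p7 by (simp add: card_Diff_subset)
    then obtain T where T: "T \<subseteq> E - C" "card T = 2 - card C" "finite T"
      using obtain_subset_with_card_n by metis
    define P where "P = C \<union> T"
    have cP: "card P = 2" unfolding P_def using T fC C by (subst card_Un_disjoint) auto
    have PE: "P \<subseteq> E" unfolding P_def using T C by auto
    have fP: "finite P" unfolding P_def using fC T by simp
    have "2 \<le> card (E - P)" using PE cE cP p7 fP by (simp add: card_Diff_subset)
    then obtain W where W: "W \<subseteq> E - P" "card W = 2" "finite W"
      using obtain_subset_with_card_n by metis
    then obtain w1 w2 where w: "W = {w1, w2}" "w1 \<noteq> w2" by (meson card_2_iff)
    obtain a b where ab: "P = {a, b}" "a \<noteq> b" using cP by (meson card_2_iff)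
    have in1: "insert w1 P \<subseteq> E \<and> card (insert w1 P) = 3" using W w PE cP fP by auto
    have in2: "insert w2 P \<subseteq> E \<and> card (insert w2 P) = 3" using W w PE cP fP by auto
    show ?thesis
    proof (cases "dep p u (insert w1 P) \<and> dep p u (insert w2 P)")
      case True
      then have "insert w1 P = insert w2 P" using Kk[of _ _ a b] ab by blast
      then have "w1 \<in> insert w2 P" by blast
      then have False using w W by blast
      then show ?thesis by blast
    next
      case False
      have CP: "C \<subseteq> P" unfolding P_def by blast
      show ?thesis
      proof (cases "dep p u (insert w1 P)")
        case True
        then have "\<not> dep p u (insert w2 P)" using False by blast
        then have "insert w2 P \<in> BB" using in2 unfolding BB_def by blast
        then show ?thesis using CP by blast
      next
        case False
        then have "insert w1 P \<in> BB" using in1 unfolding BB_def by blast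
        then show ?thesis using CP by blast
      qed
    qed
  qed
  have bases: "matroid_bases E BB"
    unfolding matroid_bases_def
  proof (intro conjI ballI)
    show "finite E" by (rule cE(2))
    show "BB \<noteq> {}" using ext[of "{}"] by auto
    show "B \<subseteq> E" if "B \<in> BB" for B using that BB_def by blast
    fix B1 B2 x assume B1: "B1 \<in> BB" and B2: "B2 \<in> BB" and x: "x \<in> B1 - B2"
    define P where "P = B1 - {x}"
    have "card B1 = 3" "card B2 = 3" using B1 B2 unfolding BB_def by auto
    then have fB: "finite B1" "finite B2" using card.infinite by force+
    have cP: "card P = 2" using B1 x fB unfolding P_def BB_def by auto
    have "\<not> B2 \<subseteq> B1"
    proof
      assume "B2 \<subseteq> B1"
      moreover have "card B2 = card B1" using B1 B2 BB_def by simp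
      ultimately have "B2 = B1" using fB card_subset_eq by blast
      then show False using x by blast
    qed
    then obtain y where y: "y \<in> B2 - B1" by blast
    have good: "insert w P \<in> BB" if "w \<in> B2 - B1" "\<not> dep p u (insert w P)" for w
    proof -
      have "insert w P \<subseteq> E" using that B1 B2 unfolding P_def BB_def by auto
      moreover have "card (insert w P) = 3" using that cP fB unfolding P_def by auto
      ultimately show ?thesis using that BB_def by blast
    qed
    show "\<exists>y\<in>B2 - B1. insert y (B1 - {x}) \<in> BB"
    proof (cases "dep p u (insert y P)")
      case False then show ?thesis using good y P_def by blast
    next
      case dy: True
      show ?thesis
      proof (cases "B2 - B1 = {y}")
        case True
        have "B2 \<inter> B1 \<subseteq> P" using x unfolding P_def by auto
        moreover have "card (B2 \<inter> B1) = 2"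
        proof -
          have "B2 = insert y (B2 \<inter> B1)" using True by blast
          then have "card B2 = Suc (card (B2 \<inter> B1))" using fB y
            by (metis DiffD2 IntD2 card_insert_disjoint finite_Int)
          then show ?thesis using B2 BB_def by simp
        qed
        ultimately have "B2 \<inter> B1 = P" using cP fB unfolding P_def
          by (metis card_subset_eq finite_Diff)
        then have "B2 = insert y P" using True by blast
        then have "insert y P \<in> BB" using B2 by simp
        then show ?thesis using dy BB_def by blast
      next
        case False
        then obtain y' where y': "y' \<in> B2 - B1" "y' \<noteq> y" using y by blast
        show ?thesis
        proof (cases "dep p u (insert y' P)")
          case False then show ?thesis using good y' P_def by blast
        next
          case True
          obtain a b where ab: "P = {a, b}" "a \<noteq> b" using cP by (meson card_2_iff)
          have "insert y P = insert y' P" using Kk[OF dy True, of a b] ab by blast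
          then have "y \<in> insert y' P" by blast
          then have False using y y' unfolding P_def by blast
          then show ?thesis by blast
        qed
      qed
    qed
  qed
  have simple: "matroid_simple E BB"
    unfolding matroid_simple_def
  proof (intro allI impI)
    fix C assume "m_circuit E BB C"
    then have C: "C \<subseteq> E" "\<not> m_indep BB C" unfolding m_circuit_def by auto
    show "card C \<ge> 3"
    proof (rule ccontr)
      assume "\<not> card C \<ge> 3"
      then obtain B where "B \<in> BB" "C \<subseteq> B" using ext[OF C(1)] by force
      then show False using C(2) m_indep_def by blast
    qed
  qed
  have inv: "zp_invariant p BB"
    unfolding zp_invariant_def
  proof (intro ballI allI impI)
    fix B t assume B: "B \<in> BB" and t: "t < p"
    have p0: "p > 0" using p7 by simp
    have BE: "B \<subseteq> E" using B BB_def by blast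
    have "zp_translate p t B \<subseteq> E" unfolding zp_translate_def E_def using p0 by auto
    moreover have "card (zp_translate p t B) = 3"
    proof -
      have "inj_on (\<lambda>y. (y + t) mod p) B" using tr_inj[OF p0] BE E_def inj_on_subset by blast
      then show ?thesis unfolding zp_translate_def using B BB_def by (simp add: card_image)
    qed
    moreover have "\<not> dep p u (zp_translate p t B)"
    proof
      assume "dep p u (zp_translate p t B)"
      then have "dep p u (zp_translate p (p - t) (zp_translate p t B))" using dep_tr p0 by blast
      then have "dep p u B" using tr_back BE E_def t by simp
      then show False using B BB_def by blast
    qed
    ultimately show "zp_translate p t B \<in> BB" using BB_def by blast
  qed
  have rank: "matroid_rank_is BB 3" unfolding matroid_rank_is_def BB_def by blast
  have iff: "\<forall>S. S \<subseteq> {0..<p} \<and> card S = 3 \<longrightarrow> (S \<in> BB \<longleftrightarrow> \<not> dep p u S)"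
    unfolding BB_def E_def by blast
  have bases': "matroid_bases {0..<p} BB" and simple': "matroid_simple {0..<p} BB"
    using bases simple unfolding E_def by auto
  show ?thesis
    unfolding dep_def[symmetric]
    by (rule exI[of _ BB]) (intro conjI bases' rank simple' inv iff)
qed

end
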